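(* Let $n,t\ge1$, $q\ge2$, $b\ge1$. Then \[ N_{q,b}^+(n,t)=q^{t(b-1)}\sum_{i=0}^{t-1}\binom{n+t}{i}(q-1)^i\big[1-(-1)^{t-i}\big]. \]
   Context: $\Sigma_q=\{0,\ldots,q-1\}$. A $b$-burst-insertion at position $i\in[1,n+1]$ transforms $x_1\cdots x_n$ into $x_1\cdots x_{i-1}y_1\cdots y_b x_i\cdots x_n$ for arbitrary $y_1\cdots y_b\in\Sigma_q^b$. $\mathcal{I}_{t,b}(\boldsymbol{x})$ is the set of all length-$(n+tb)$ sequences obtainable from $\boldsymbol{x}$ by $t$ successive $b$-burst-insertions. $N_{q,b}^+(n,t)=\max\{|\mathcal{I}_{t,b}(\boldsymbol{x})\cap\mathcal{I}_{t,b}(\boldsymbol{y})|:\boldsymbol{x}\ne\boldsymbol{y}\in\Sigma_q^n\}$. Convention: $\binom{m}{i}=0$ if $m<i$. *)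

theory Defs
  imports Main
begin

definition seqs :: "nat \<Rightarrow> nat \<Rightarrow> nat list set" where
  "seqs q n = {x. length x = n \<and> set x \<subseteq> {0..<q}}"

text \<open>All results of a single b-burst-insertion into x (insertion position i+1, i = 0..length x).\<close>
definition burst_ins :: "nat \<Rightarrow> nat \<Rightarrow> nat list \<Rightarrow> nat list set" where
  "burst_ins q b x = {take i x @ y @ drop i x | i y. i \<le> length x \<and> y \<in> seqs q b}"

fun burst_ins_ball :: "nat \<Rightarrow> nat \<Rightarrow> nat \<Rightarrow> nat list \<Rightarrow> nat list set" where
  "burst_ins_ball q b 0 x = {x}"
| "burst_ins_ball q b (Suc t) x = (\<Union>z \<in> burst_ins_ball q b t x. burst_ins q b z)"

definition N_plus :: "nat \<Rightarrow> nat \<Rightarrow> nat \<Rightarrow> nat \<Rightarrow> nat" where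
  "N_plus q b n t = Max {card (burst_ins_ball q b t x \<inter> burst_ins_ball q b t y) | x y.
      x \<in> seqs q n \<and> y \<in> seqs q n \<and> x \<noteq> y}"

end

theory Submission
  imports Defs
begin

inductive R :: "nat \<Rightarrow> nat \<Rightarrow> nat list \<Rightarrow> nat \<Rightarrow> nat list \<Rightarrow> bool" for q b where
  Rnil: "R q b [] 0 []"
| Rcons: "R q b x t z \<Longrightarrow> R q b (a#x) t (a#z)"
| Rburst: "R q b x t z \<Longrightarrow> y \<in> seqs q b \<Longrightarrow> R q b x (Suc t) (y @ z)"

lemma R0: "R q b x 0 z \<longleftrightarrow> z = x"
proof
  have "R q b x t z \<Longrightarrow> t = 0 \<Longrightarrow> z = x" for t
    by (induction rule: R.induct) auto
  then show "R q b x 0 z \<Longrightarrow> z = x" by blast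
next
  have "R q b x 0 x" by (induction x) (auto intro: R.intros)
  then show "z = x \<Longrightarrow> R q b x 0 z" by simp
qed

lemma R_ins:
  assumes "R q b x t z" "i \<le> length z" "y \<in> seqs q b"
  shows "R q b x (Suc t) (take i z @ y @ drop i z)"
  using assms
proof (induction arbitrary: i y rule: R.induct)
  case Rnil
  then show ?case using R.Rburst[OF R.Rnil] by simp
next
  case (Rcons x t z a)
  show ?case
  proof (cases i)
    case 0
    then show ?thesis using R.Rburst[OF R.Rcons[OF Rcons.hyps], of y] Rcons.prems by simp
  next
    case (Suc j)
    then show ?thesis using R.Rcons[OF Rcons.IH[of j y]] Rcons.prems by simp
  qed
next
  case (Rburst x t z y0)
  have ly0: "length y0 = b" using Rburst.hyps(2) by (simp add: seqs_def)
  show ?case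
  proof (cases "b \<le> i")
    case True
    have "R q b x (Suc t) (take (i-b) z @ y @ drop (i-b) z)"
      using Rburst.IH[of "i-b" y] Rburst.prems True ly0 by simp
    from R.Rburst[OF this Rburst.hyps(2)] show ?thesis using True ly0 by simp
  next
    case False
    define w1 where "w1 = take i y0 @ take (b-i) y"
    define w2 where "w2 = drop (b-i) y @ drop i y0"
    have ly: "length y = b" using Rburst.prems by (simp add: seqs_def)
    have s1: "w1 \<in> seqs q b" using Rburst.hyps(2) Rburst.prems False ly ly0
      unfolding w1_def seqs_def by (auto dest: in_set_takeD)
    have s2: "w2 \<in> seqs q b" using Rburst.hyps(2) Rburst.prems False ly ly0
      unfolding w2_def seqs_def by (auto dest: in_set_dropD)
    have "R q b x (Suc (Suc t)) (w1 @ w2 @ z)"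
      using R.Rburst[OF R.Rburst[OF Rburst.hyps(1) s2] s1] by simp
    moreover have "take i (y0 @ z) = take i y0" "drop i (y0 @ z) = drop i y0 @ z"
      using False ly0 by simp_all
    then have "take i (y0 @ z) @ y @ drop i (y0 @ z) = take i y0 @ (take (b-i) y @ drop (b-i) y) @ drop i y0 @ z"
      by simp
    then have "take i (y0 @ z) @ y @ drop i (y0 @ z) = w1 @ w2 @ z"
      unfolding w1_def w2_def by simp
    ultimately show ?thesis by simp
  qed
qed

lemma R_del:
  assumes "R q b x t' w" "t' = Suc t"
  shows "\<exists>z i y. R q b x t z \<and> i \<le> length z \<and> y \<in> seqs q b \<and> w = take i z @ y @ drop i z"
  using assms
proof (induction arbitrary: t rule: R.induct)
  case Rnil then show ?case by simp
next
  case (Rcons x t0 z a)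
  then obtain z0 i y where "R q b x t z0" "i \<le> length z0" "y \<in> seqs q b" "z = take i z0 @ y @ drop i z0" by blast
  then show ?case
    by (intro exI[of _ "a#z0"] exI[of _ "Suc i"] exI[of _ y]) (auto intro: R.Rcons)
next
  case (Rburst x t0 z y)
  then show ?case by (intro exI[of _ z] exI[of _ 0] exI[of _ y]) auto
qed

lemma B_eq: "burst_ins_ball q b t x = {z. R q b x t z}"
proof (induction t)
  case 0 then show ?case by (auto simp: R0)
next
  case (Suc t)
  show ?case
  proof (intro set_eqI iffI)
    fix w assume "w \<in> burst_ins_ball q b (Suc t) x"
    then obtain z where z: "R q b x t z" "w \<in> burst_ins q b z" using Suc by auto
    then obtain i y where "w = take i z @ y @ drop i z" "i \<le> length z" "y \<in> seqs q b"
      unfolding burst_ins_def by blast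
    with z show "w \<in> {z. R q b x (Suc t) z}" using R_ins by auto
  next
    fix w assume "w \<in> {z. R q b x (Suc t) z}"
    then obtain z i y where "R q b x t z" "i \<le> length z" "y \<in> seqs q b" "w = take i z @ y @ drop i z"
      using R_del by blast
    then have "R q b x t z" "w \<in> burst_ins q b z" unfolding burst_ins_def by blast+
    then show "w \<in> burst_ins_ball q b (Suc t) x" using Suc by auto
  qed
qed

lemma R_len: "R q b x t z \<Longrightarrow> length z = length x + t*b \<and> set z \<subseteq> set x \<union> {0..<q}"
  by (induction rule: R.induct) (auto simp: seqs_def)

lemma R_bursts: "p \<in> seqs q (k*b) \<Longrightarrow> R q b x t z \<Longrightarrow> R q b x (t+k) (p@z)"
proof (induction k arbitrary: p)
  case 0 then show ?case by (simp add: seqs_def)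
next
  case (Suc k)
  have lp: "length p = b + k*b" using Suc.prems by (simp add: seqs_def)
  have d: "drop b p \<in> seqs q (k*b)" using Suc.prems lp by (auto simp: seqs_def dest: in_set_dropD)
  have tk: "take b p \<in> seqs q b" using Suc.prems lp by (auto simp: seqs_def dest: in_set_takeD)
  have "R q b x (t+k) (drop b p @ z)" using Suc.IH[OF d Suc.prems(2)] .
  from R.Rburst[OF this tk] show ?case
    by (metis append.assoc append_take_drop_id add_Suc_right)
qed

lemma R_decomp: "R q b x0 t z \<Longrightarrow> x0 = a#x \<Longrightarrow>
   \<exists>k p z1. k \<le> t \<and> p \<in> seqs q (k*b) \<and> z = p @ a # z1 \<and> R q b x (t-k) z1"
proof (induction rule: R.induct)
  case Rnil then show ?case by simp
next
  case (Rcons x' t z a')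
  then show ?case by (intro exI[of _ 0] exI[of _ "[]"] exI[of _ z]) (auto simp: seqs_def)
next
  case (Rburst x' t z y)
  then obtain k p z1 where "k \<le> t" "p \<in> seqs q (k*b)" "z = p @ a # z1" "R q b x (t-k) z1" by blast
  then show ?case using Rburst.hyps(2)
    by (intro exI[of _ "Suc k"] exI[of _ "y@p"] exI[of _ z1]) (auto simp: seqs_def)
qed

lemma R_shift:
  assumes "R q b (a#x) t z" "a < q" "v \<in> seqs q (b-1)" "b \<ge> 1"
  shows "R q b x (Suc t) (v @ z)"
proof -
  obtain k p z1 where k: "k \<le> t" "p \<in> seqs q (k*b)" "z = p @ a # z1" "R q b x (t-k) z1"
    using R_decomp[OF assms(1) refl] by blast
  have "v @ p @ [a] \<in> seqs q (Suc k * b)" using k(2) assms(2-4) by (auto simp: seqs_def)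
  from R_bursts[OF this k(4)] have "R q b x (t - k + Suc k) ((v @ p @ [a]) @ z1)" .
  then show ?thesis using k by simp
qed

lemma G1_dir: "R q b x0 t w \<Longrightarrow> x0 = a#x \<Longrightarrow> w = a#z \<Longrightarrow> b \<ge> 1 \<Longrightarrow> R q b x t z"
proof (induction rule: R.induct)
  case Rnil then show ?case by simp
next
  case (Rcons x' t z' a') then show ?case by simp
next
  case (Rburst x' t z' y)
  from Rburst.prems Rburst.hyps(2) obtain y' where y: "y = a # y'" "z = y' @ z'"
    by (cases y) (auto simp: seqs_def)
  have "a < q" "y' \<in> seqs q (b-1)" using Rburst.hyps(2) y by (auto simp: seqs_def)
  from R_shift[OF Rburst.hyps(1)[unfolded Rburst.prems(1)] this Rburst.prems(3)] show ?case using y by simp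
qed

lemma G1: "b \<ge> 1 \<Longrightarrow> R q b (a#x) t (a#z) \<longleftrightarrow> R q b x t z"
  using G1_dir R.Rcons by blast

lemma G2_dir: "R q b x t w \<Longrightarrow> w = s#z \<Longrightarrow> (\<forall>x'. x \<noteq> s#x') \<Longrightarrow> b \<ge> 1 \<Longrightarrow>
  (\<exists>t0. t = Suc t0 \<and> s < q \<and> (\<exists>u z0. z = u@z0 \<and> u \<in> seqs q (b-1) \<and> R q b x t0 z0))"
proof (induction rule: R.induct)
  case Rnil then show ?case by simp
next
  case (Rcons x' t z' a') then show ?case by simp
next
  case (Rburst x' t z' y)
  from Rburst.prems Rburst.hyps(2) obtain y' where y: "y = s # y'" "z = y' @ z'"
    by (cases y) (auto simp: seqs_def)
  then show ?case using Rburst.hyps Rburst.prems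
    by (intro exI[of _ t] conjI exI[of _ y'] exI[of _ z']) (auto simp: seqs_def)
qed

lemma G2:
  assumes "b \<ge> 1" "\<forall>x'. x \<noteq> s#x'"
  shows "R q b x t (s#z) \<longleftrightarrow> (\<exists>t0. t = Suc t0 \<and> s < q \<and> (\<exists>u z0. z = u@z0 \<and> u \<in> seqs q (b-1) \<and> R q b x t0 z0))"
proof
  assume "R q b x t (s#z)"
  then show "\<exists>t0. t = Suc t0 \<and> s < q \<and> (\<exists>u z0. z = u@z0 \<and> u \<in> seqs q (b-1) \<and> R q b x t0 z0)"
    using G2_dir assms by blast
next
  assume "\<exists>t0. t = Suc t0 \<and> s < q \<and> (\<exists>u z0. z = u@z0 \<and> u \<in> seqs q (b-1) \<and> R q b x t0 z0)"
  then obtain t0 u z0 where h: "t = Suc t0" "s < q" "z = u@z0" "u \<in> seqs q (b-1)" "R q b x t0 z0" by blast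
  have "s#u \<in> seqs q b" using h assms(1) by (auto simp: seqs_def)
  from R.Rburst[OF h(5) this] show "R q b x t (s#z)" using h by simp
qed


definition Bs :: "nat \<Rightarrow> nat \<Rightarrow> nat \<Rightarrow> nat list \<Rightarrow> nat list set" where
  "Bs q b t x = {z. R q b x t z}"
definition TT :: "nat \<Rightarrow> nat list set \<Rightarrow> nat list set" where
  "TT s S = {z. s#z \<in> S}"
definition EE :: "nat \<Rightarrow> nat \<Rightarrow> nat list set \<Rightarrow> nat list set" where
  "EE q m S = {u@z |u z. u \<in> seqs q m \<and> z \<in> S}"

lemma TT_same: "b \<ge> 1 \<Longrightarrow> TT a (Bs q b t (a#x)) = Bs q b t x"
  by (auto simp: TT_def Bs_def G1)

lemma TT_diff0: "b \<ge> 1 \<Longrightarrow> s < q \<Longrightarrow> \<forall>x'. x \<noteq> s#x' \<Longrightarrow>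
   TT s (Bs q b (Suc t) x) = EE q (b-1) (Bs q b t x)"
  unfolding TT_def Bs_def EE_def using G2[of b x s q "Suc t"] by auto

lemma TT_diff: "b \<ge> 1 \<Longrightarrow> s < q \<Longrightarrow> x = [] \<or> hd x \<noteq> s \<Longrightarrow>
   TT s (Bs q b (Suc t) x) = EE q (b-1) (Bs q b t x)"
  by (rule TT_diff0) auto

lemma TT_inter: "TT s (A \<inter> B) = TT s A \<inter> TT s B"
  by (auto simp: TT_def)

lemma EE_inter: "EE q m A \<inter> EE q m B = EE q m (A \<inter> B)"
proof
  show "EE q m A \<inter> EE q m B \<subseteq> EE q m (A \<inter> B)"
  proof
    fix w assume "w \<in> EE q m A \<inter> EE q m B"
    then obtain u1 z1 u2 z2 where h: "w = u1@z1" "u1 \<in> seqs q m" "z1 \<in> A"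
      "w = u2@z2" "u2 \<in> seqs q m" "z2 \<in> B" unfolding EE_def by blast
    have "length u1 = length u2" using h(2,5) by (simp add: seqs_def)
    then have "u1 = u2 \<and> z1 = z2" using h(1,4) by simp
    then show "w \<in> EE q m (A \<inter> B)" using h unfolding EE_def by blast
  qed
qed (auto simp: EE_def)

lemma EE_mono: "A \<subseteq> B \<Longrightarrow> EE q m A \<subseteq> EE q m B"
  unfolding EE_def by auto

lemma finite_seqs: "finite (seqs q m)"
  unfolding seqs_def using finite_lists_length_eq[of "{0..<q}" m] by (simp add: conj_commute)

lemma card_seqs: "card (seqs q m) = q^m"
  unfolding seqs_def using card_lists_length_eq[of "{0..<q}" m] by (simp add: conj_commute)

lemma EE_img: "EE q m S = (\<lambda>p. fst p @ snd p) ` (seqs q m \<times> S)"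
proof
  show "EE q m S \<subseteq> (\<lambda>p. fst p @ snd p) ` (seqs q m \<times> S)"
  proof
    fix w assume "w \<in> EE q m S"
    then obtain u z where "w = u@z" "u \<in> seqs q m" "z \<in> S" unfolding EE_def by blast
    then show "w \<in> (\<lambda>p. fst p @ snd p) ` (seqs q m \<times> S)"
      by (intro rev_image_eqI[of "(u,z)"]) auto
  qed
next
  show "(\<lambda>p. fst p @ snd p) ` (seqs q m \<times> S) \<subseteq> EE q m S"
  proof
    fix w assume "w \<in> (\<lambda>p. fst p @ snd p) ` (seqs q m \<times> S)"
    then obtain u z where "w = u @ z" "u \<in> seqs q m" "z \<in> S" by auto
    then show "w \<in> EE q m S" unfolding EE_def by blast
  qed
qed

lemma card_EE: "finite S \<Longrightarrow> card (EE q m S) = q^m * card S"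
proof -
  assume f: "finite S"
  have "inj_on (\<lambda>p. fst p @ snd p) (seqs q m \<times> S)"
    by (auto simp: inj_on_def seqs_def)
  then have "card (EE q m S) = card (seqs q m \<times> S)" unfolding EE_img by (rule card_image)
  also have "\<dots> = q^m * card S" by (simp add: card_cartesian_product card_seqs)
  finally show ?thesis .
qed

lemma finite_EE: "finite S \<Longrightarrow> finite (EE q m S)"
  unfolding EE_img using finite_seqs by simp

lemma finite_Bs: "finite (Bs q b t x)"
proof -
  have "Bs q b t x \<subseteq> {z. set z \<subseteq> set x \<union> {0..<q} \<and> length z = length x + t*b}"
    unfolding Bs_def using R_len by blast
  moreover have "finite {z. set z \<subseteq> set x \<union> {0..<q} \<and> length z = length x + t*b}"
    by (rule finite_lists_length_eq) simp
  ultimately show ?thesis by (rule finite_subset)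
qed

lemma card_split:
  assumes "finite S" "\<forall>z\<in>S. z \<noteq> [] \<and> hd z < q"
  shows "card S = (\<Sum>s<q. card (TT s S))"
proof -
  have S: "S = (\<Union>s\<in>{..<q}. (\<lambda>z. s#z) ` TT s S)"
  proof (intro set_eqI iffI)
    fix z assume "z \<in> S"
    with assms(2) obtain s z' where "z = s#z'" "s < q" by (cases z) auto
    with \<open>z \<in> S\<close> show "z \<in> (\<Union>s\<in>{..<q}. (\<lambda>z. s#z) ` TT s S)" by (auto simp: TT_def)
  qed (auto simp: TT_def)
  have fin: "finite (TT s S)" for s
    unfolding TT_def using finite_vimageI[OF assms(1), of "Cons s"] by (simp add: vimage_def)
  have "card S = (\<Sum>s<q. card ((\<lambda>z. s#z) ` TT s S))"
    by (subst S, rule card_UN_disjoint) (auto simp: fin)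
  also have "\<dots> = (\<Sum>s<q. card (TT s S))"
    by (rule sum.cong) (auto intro: card_image)
  finally show ?thesis .
qed

lemma heads:
  assumes "x \<in> seqs q n" "x \<noteq> [] \<or> t > 0" "b \<ge> 1" "z \<in> Bs q b t x"
  shows "z \<noteq> [] \<and> hd z < q"
proof -
  from assms(4) R_len have l: "length z = length x + t*b" "set z \<subseteq> set x \<union> {0..<q}"
    unfolding Bs_def by blast+
  have nz: "z \<noteq> []" using l(1) assms(2,3) by auto
  then have "hd z \<in> set z" by simp
  then have "hd z \<in> set x \<union> {0..<q}" using l(2) by blast
  then show ?thesis using nz assms(1) by (auto simp: seqs_def)
qed

lemma EE_sub: "b \<ge> 1 \<Longrightarrow> a < q \<Longrightarrow> EE q (b-1) (Bs q b t (a#x)) \<subseteq> Bs q b (Suc t) x"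
  unfolding EE_def Bs_def using R_shift by blast

lemma Bs0: "Bs q b 0 x = {x}"
  by (auto simp: Bs_def R0)

fun K :: "nat \<Rightarrow> nat \<Rightarrow> nat \<Rightarrow> nat" where
  "K q 0 t = q^t"
| "K q (Suc n) 0 = 1"
| "K q (Suc n) (Suc t) = K q n (Suc t) + (q-1) * K q (Suc n) t"

fun G :: "nat \<Rightarrow> nat \<Rightarrow> nat \<Rightarrow> nat" where
  "G q n 0 = 0"
| "G q n (Suc t) = 2 * K q n t + (q-2) * G q n t"

lemma K_0: "K q n 0 = 1" by (cases n) auto

lemma ar: "2*(A+d1*B)+d2*(C+d1*D) = (2*A+d2*C) + d1*(2*B+d2*(D::nat))"
  by (simp add: algebra_simps)

lemma G_rec: "G q (Suc n) (Suc t) = G q n (Suc t) + (q-1) * G q (Suc n) t"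
proof (induction t)
  case 0 then show ?case by (simp add: K_0)
next
  case (Suc t)
  have "G q (Suc n) (Suc (Suc t)) = 2 * K q (Suc n) (Suc t) + (q-2) * G q (Suc n) (Suc t)" by simp
  also have "\<dots> = 2 * (K q n (Suc t) + (q-1) * K q (Suc n) t) + (q-2) * (G q n (Suc t) + (q-1) * G q (Suc n) t)"
    using Suc by simp
  also have "\<dots> = G q n (Suc (Suc t)) + (q-1) * G q (Suc n) (Suc t)"
    using ar[of "K q n (Suc t)" "q-1" "K q (Suc n) t" "q-2" "G q n (Suc t)" "G q (Suc n) t"] by simp
  finally show ?case .
qed

lemma sum_remove1: "a < (q::nat) \<Longrightarrow> (\<Sum>s<q. f s) = f a + (\<Sum>s\<in>{..<q}-{a}. f s)"
  by (rule sum.remove) auto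

lemma sum_remove2: "a < (q::nat) \<Longrightarrow> a2 < q \<Longrightarrow> a \<noteq> a2 \<Longrightarrow>
   (\<Sum>s<q. f s) = f a + f a2 + (\<Sum>s\<in>{..<q}-{a,a2}. f s)"
proof -
  assume h: "a < q" "a2 < q" "a \<noteq> a2"
  have "(\<Sum>s<q. f s) = f a + (\<Sum>s\<in>{..<q}-{a}. f s)" using h by (intro sum.remove) auto
  also have "(\<Sum>s\<in>{..<q}-{a}. f s) = f a2 + (\<Sum>s\<in>{..<q}-{a}-{a2}. f s)"
    using h by (intro sum.remove) auto
  finally show ?thesis by (simp add: Diff_insert2[symmetric] insert_commute add.assoc)
qed


lemma sum_const_minus1: "a < (q::nat) \<Longrightarrow> (\<Sum>s\<in>{..<q}-{a}. (C::nat)) = (q-1) * C"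
  by simp

lemma sum_const_minus2: "a < (q::nat) \<Longrightarrow> a2 < q \<Longrightarrow> a \<noteq> a2 \<Longrightarrow> (\<Sum>s\<in>{..<q}-{a,a2}. (C::nat)) = (q-2) * C"
  by (simp add: card_Diff_subset numeral_2_eq_2)

lemma card_TT_diff: "b \<ge> 1 \<Longrightarrow> s < q \<Longrightarrow> x = [] \<or> hd x \<noteq> s \<Longrightarrow>
   card (TT s (Bs q b (Suc t) x)) = q^(b-1) * card (Bs q b t x)"
  by (simp add: TT_diff card_EE finite_Bs)

lemma card_single:
  assumes "b \<ge> 1"
  shows "x \<in> seqs q n \<Longrightarrow> card (Bs q b t x) = (q^(b-1))^t * K q n t"
proof (induction t arbitrary: x n)
  case 0 then show ?case by (simp add: Bs0 K_0)
next
  case (Suc t)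
  have IHt: "card (Bs q b t x) = (q^(b-1))^t * K q n t" if "x \<in> seqs q n" for x n using Suc.IH that .
  show ?case using Suc.prems
  proof (induction x arbitrary: n)
    case Nil
    then have n0: "n = 0" by (simp add: seqs_def)
    have hd: "\<forall>z\<in>Bs q b (Suc t) []. z \<noteq> [] \<and> hd z < q" using heads[OF Nil.prems _ assms] by auto
    have "card (Bs q b (Suc t) []) = (\<Sum>s<q. card (TT s (Bs q b (Suc t) [])))"
      by (rule card_split[OF finite_Bs hd])
    also have "\<dots> = (\<Sum>s<q. q^(b-1) * card (Bs q b t []))"
    proof (rule sum.cong)
      fix s assume "s \<in> {..<q}"
      then show "card (TT s (Bs q b (Suc t) [])) = q^(b-1) * card (Bs q b t [])"
        by (intro card_TT_diff[OF assms]) auto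
    qed simp
    also have "\<dots> = q * (q^(b-1) * ((q^(b-1))^t * q^t))" using IHt[OF Nil.prems] n0 by simp
    also have "\<dots> = (q^(b-1))^(Suc t) * q^(Suc t)" by (simp only: power_Suc mult_ac)
    finally show ?case using n0 by simp
  next
    case (Cons a x')
    then obtain n' where n': "n = Suc n'" "x' \<in> seqs q n'" "a < q" by (cases n) (auto simp: seqs_def)
    have hd: "\<forall>z\<in>Bs q b (Suc t) (a#x'). z \<noteq> [] \<and> hd z < q" using heads[OF Cons.prems _ assms] by auto
    have "card (Bs q b (Suc t) (a#x')) = (\<Sum>s<q. card (TT s (Bs q b (Suc t) (a#x'))))"
      by (rule card_split[OF finite_Bs hd])
    also have "\<dots> = card (TT a (Bs q b (Suc t) (a#x'))) + (\<Sum>s\<in>{..<q}-{a}. card (TT s (Bs q b (Suc t) (a#x'))))"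
      by (rule sum_remove1[OF n'(3)])
    also have "(\<Sum>s\<in>{..<q}-{a}. card (TT s (Bs q b (Suc t) (a#x')))) = (\<Sum>s\<in>{..<q}-{a}. q^(b-1) * card (Bs q b t (a#x')))"
    proof (rule sum.cong)
      fix s assume "s \<in> {..<q}-{a}"
      then show "card (TT s (Bs q b (Suc t) (a#x'))) = q^(b-1) * card (Bs q b t (a#x'))"
        by (intro card_TT_diff[OF assms]) auto
    qed simp
    also have "\<dots> = (q-1) * (q^(b-1) * ((q^(b-1))^t * K q n t))"
      using IHt[OF Cons.prems] n'(3) by simp
    also have "card (TT a (Bs q b (Suc t) (a#x'))) = (q^(b-1))^(Suc t) * K q n' (Suc t)"
      using Cons.IH[OF n'(2)] by (simp add: TT_same[OF assms])
    also have "(q^(b-1))^(Suc t) * K q n' (Suc t) + (q-1) * (q^(b-1) * ((q^(b-1))^t * K q n t))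
       = (q^(b-1))^(Suc t) * (K q n' (Suc t) + (q-1) * K q n t)"
      by (simp only: power_Suc distrib_left mult_ac)
    finally show ?case using n'(1) by simp
  qed
qed

lemma upper:
  assumes "b \<ge> 1"
  shows "x \<in> seqs q n \<Longrightarrow> y \<in> seqs q n \<Longrightarrow> x \<noteq> y \<Longrightarrow>
    card (Bs q b t x \<inter> Bs q b t y) \<le> (q^(b-1))^t * G q n t"
proof (induction t arbitrary: x y n)
  case 0 then show ?case by (simp add: Bs0)
next
  case (Suc t)
  have IHt: "card (Bs q b t x \<inter> Bs q b t y) \<le> (q^(b-1))^t * G q n t"
    if "x \<in> seqs q n" "y \<in> seqs q n" "x \<noteq> y" for x y n using Suc.IH that .
  show ?case using Suc.prems
  proof (induction x arbitrary: n y)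
    case Nil then show ?case by (simp add: seqs_def)
  next
    case (Cons a x')
    obtain n' where n': "n = Suc n'" "x' \<in> seqs q n'" "a < q" using Cons.prems(1) by (cases n) (auto simp: seqs_def)
    obtain a2 y' where y: "y = a2 # y'" "y' \<in> seqs q n'" "a2 < q" using Cons.prems(2) n'(1)
      by (cases y) (auto simp: seqs_def)
    let ?c = "q^(b-1)"
    let ?S = "Bs q b (Suc t) (a#x') \<inter> Bs q b (Suc t) y"
    have hd: "\<forall>z\<in>?S. z \<noteq> [] \<and> hd z < q" using heads[OF Cons.prems(1) _ assms] by auto
    have cs: "card ?S = (\<Sum>s<q. card (TT s ?S))"
      by (rule card_split[OF _ hd]) (simp add: finite_Bs)
    have other: "card (TT s ?S) \<le> ?c * (?c^t * G q n t)" if "s < q" "s \<noteq> a" "s \<noteq> a2" for s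
    proof -
      have "TT s ?S = EE q (b-1) (Bs q b t (a#x')) \<inter> EE q (b-1) (Bs q b t y)"
        unfolding TT_inter using that y by (simp add: TT_diff[OF assms])
      also have "\<dots> = EE q (b-1) (Bs q b t (a#x') \<inter> Bs q b t y)" by (rule EE_inter)
      finally have "TT s ?S = EE q (b-1) (Bs q b t (a#x') \<inter> Bs q b t y)" .
      then have "card (TT s ?S) = ?c * card (Bs q b t (a#x') \<inter> Bs q b t y)"
        by (simp add: card_EE finite_Bs)
      then show ?thesis using IHt[OF Cons.prems] by simp
    qed
    show ?case
    proof (cases "a = a2")
      case True
      have "x' \<noteq> y'" using Cons.prems(3) y True by simp
      have "card ?S = card (TT a ?S) + (\<Sum>s\<in>{..<q}-{a}. card (TT s ?S))"
        using cs sum_remove1[OF n'(3)] by simp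
      also have "card (TT a ?S) \<le> ?c^(Suc t) * G q n' (Suc t)"
        using Cons.IH[OF n'(2) y(2) \<open>x' \<noteq> y'\<close>] y True by (simp add: TT_inter TT_same[OF assms])
      also have "(\<Sum>s\<in>{..<q}-{a}. card (TT s ?S)) \<le> (\<Sum>s\<in>{..<q}-{a}. ?c * (?c^t * G q n t))"
        by (rule sum_mono) (use other True in auto)
      also have "\<dots> = (q-1) * (?c * (?c^t * G q n t))" using n'(3) by simp
      finally show ?thesis using n'(1) G_rec[of q n' t] by (simp add: algebra_simps)
    next
      case False
      have "card ?S = card (TT a ?S) + card (TT a2 ?S) + (\<Sum>s\<in>{..<q}-{a,a2}. card (TT s ?S))"
        using cs sum_remove2[OF n'(3) y(3) False] by simp
      also have "card (TT a ?S) \<le> ?c * (?c^t * K q n t)"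
      proof -
        have e1: "TT a (Bs q b (Suc t) y) = EE q (b-1) (Bs q b t y)"
          by (rule TT_diff[OF assms n'(3)]) (use False y in auto)
        have "TT a ?S \<subseteq> EE q (b-1) (Bs q b t y)"
          unfolding TT_inter e1 by blast
        then have "card (TT a ?S) \<le> card (EE q (b-1) (Bs q b t y))"
          by (intro card_mono finite_EE finite_Bs)
        then show ?thesis using card_single[OF assms Cons.prems(2)] by (simp add: card_EE finite_Bs)
      qed
      also have "card (TT a2 ?S) \<le> ?c * (?c^t * K q n t)"
      proof -
        have e1: "TT a2 (Bs q b (Suc t) (a#x')) = EE q (b-1) (Bs q b t (a#x'))"
          by (rule TT_diff[OF assms y(3)]) (use False y in auto)
        have "TT a2 ?S \<subseteq> EE q (b-1) (Bs q b t (a#x'))"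
          unfolding TT_inter e1 by blast
        then have "card (TT a2 ?S) \<le> card (EE q (b-1) (Bs q b t (a#x')))"
          by (intro card_mono finite_EE finite_Bs)
        then show ?thesis using card_single[OF assms Cons.prems(1)] by (simp add: card_EE finite_Bs)
      qed
      also have "(\<Sum>s\<in>{..<q}-{a,a2}. card (TT s ?S)) \<le> (\<Sum>s\<in>{..<q}-{a,a2}. ?c * (?c^t * G q n t))"
        by (rule sum_mono) (use other in auto)
      also have "\<dots> = (q-2) * (?c * (?c^t * G q n t))" by (rule sum_const_minus2[OF n'(3) y(3) False])
      finally show ?thesis by (simp add: algebra_simps)
    qed
  qed
qed

lemma lower:
  assumes "b \<ge> 1" "q \<ge> 2"
  shows "card (Bs q b t (0 # replicate m 0) \<inter> Bs q b t (1 # replicate m 0)) = (q^(b-1))^t * G q (Suc m) t"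
proof (induction t)
  case 0 then show ?case by (simp add: Bs0)
next
  case (Suc t)
  define c where "c = q^(b-1)"
  define w where "w = replicate m (0::nat)"
  define x where "x = 0 # w"
  define y where "y = 1 # w"
  define S where "S = Bs q b (Suc t) x \<inter> Bs q b (Suc t) y"
  have IH: "card (Bs q b t x \<inter> Bs q b t y) = c^t * G q (Suc m) t"
    using Suc.IH unfolding c_def x_def y_def w_def .
  have xs: "x \<in> seqs q (Suc m)" "y \<in> seqs q (Suc m)" using assms by (auto simp: seqs_def x_def y_def w_def)
  have hd: "\<forall>z\<in>S. z \<noteq> [] \<and> hd z < q" using heads[OF xs(1) _ assms(1)] unfolding S_def by auto
  have cs: "card S = (\<Sum>s<q. card (TT s S))"
    by (rule card_split[OF _ hd]) (simp add: finite_Bs S_def)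
  have q01: "0 < q" "1 < q" "(0::nat) \<noteq> 1" using assms by auto
  have "card S = card (TT 0 S) + card (TT 1 S) + (\<Sum>s\<in>{..<q}-{0,1}. card (TT s S))"
    using cs sum_remove2[OF q01] by simp
  also have "card (TT 0 S) = c * (c^t * K q (Suc m) t)"
  proof -
    have e1: "TT 0 (Bs q b (Suc t) y) = EE q (b-1) (Bs q b t y)"
      by (rule TT_diff[OF assms(1) q01(1)]) (simp add: y_def)
    have e2: "TT 0 (Bs q b (Suc t) x) = Bs q b (Suc t) w"
      unfolding x_def by (rule TT_same[OF assms(1)])
    have "TT 0 S = EE q (b-1) (Bs q b t y)"
      unfolding S_def TT_inter e1 e2 using EE_sub[OF assms(1) q01(2), of t w] unfolding y_def by blast
    then show ?thesis using card_single[OF assms(1) xs(2)] by (simp add: card_EE finite_Bs c_def)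
  qed
  also have "card (TT 1 S) = c * (c^t * K q (Suc m) t)"
  proof -
    have e1: "TT 1 (Bs q b (Suc t) x) = EE q (b-1) (Bs q b t x)"
      by (rule TT_diff[OF assms(1) q01(2)]) (simp add: x_def)
    have e2: "TT 1 (Bs q b (Suc t) y) = Bs q b (Suc t) w"
      unfolding y_def by (rule TT_same[OF assms(1)])
    have "TT 1 S = EE q (b-1) (Bs q b t x)"
      unfolding S_def TT_inter e1 e2 using EE_sub[OF assms(1) q01(1), of t w] unfolding x_def by blast
    then show ?thesis using card_single[OF assms(1) xs(1)] by (simp add: card_EE finite_Bs c_def)
  qed
  also have "(\<Sum>s\<in>{..<q}-{0,1}. card (TT s S)) = (\<Sum>s\<in>{..<q}-{0,1}. c * (c^t * G q (Suc m) t))"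
  proof (rule sum.cong)
    fix s assume s: "s \<in> {..<q}-{0,1}"
    have e1: "TT s (Bs q b (Suc t) x) = EE q (b-1) (Bs q b t x)"
      by (rule TT_diff[OF assms(1)]) (use s in \<open>auto simp: x_def\<close>)
    have e2: "TT s (Bs q b (Suc t) y) = EE q (b-1) (Bs q b t y)"
      by (rule TT_diff[OF assms(1)]) (use s in \<open>auto simp: y_def\<close>)
    have "TT s S = EE q (b-1) (Bs q b t x \<inter> Bs q b t y)"
      unfolding S_def TT_inter e1 e2 by (rule EE_inter)
    then show "card (TT s S) = c * (c^t * G q (Suc m) t)"
      using IH by (simp add: card_EE finite_Bs c_def)
  qed simp
  also have "\<dots> = (q-2) * (c * (c^t * G q (Suc m) t))" by (rule sum_const_minus2[OF q01])
  finally have "card S = c^(Suc t) * (2 * K q (Suc m) t + (q-2) * G q (Suc m) t)"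
    by (simp add: algebra_simps)
  then show ?case unfolding S_def x_def y_def w_def c_def by simp
qed


definition Fc :: "nat \<Rightarrow> nat \<Rightarrow> nat \<Rightarrow> int" where
  "Fc q n t = (\<Sum>i<t. int ((n+t) choose i) * (int q - 1)^i * (1 - (-1)^(t-i)))"

lemma Fc_pascal: "Fc q (Suc n) (Suc t) = Fc q n (Suc t) + (int q - 1) * Fc q (Suc n) t"
proof -
  define a where "a = int q - 1"
  define e where "e k = (1 - (-1)^k :: int)" for k
  have L: "Fc q (Suc n) (Suc t) = e (Suc t) + (\<Sum>j<t. (int (Suc (n+t) choose j) + int (Suc (n+t) choose Suc j)) * a^Suc j * e (t-j))"
    unfolding Fc_def a_def e_def by (simp add: sum.lessThan_Suc_shift del: sum.lessThan_Suc)
  have M: "Fc q n (Suc t) = e (Suc t) + (\<Sum>j<t. int (Suc (n+t) choose Suc j) * a^Suc j * e (t-j))"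
    unfolding Fc_def a_def e_def by (simp add: sum.lessThan_Suc_shift del: sum.lessThan_Suc)
  have N: "a * Fc q (Suc n) t = (\<Sum>j<t. int (Suc (n+t) choose j) * a^Suc j * e (t-j))"
    unfolding Fc_def a_def e_def by (simp add: sum_distrib_left algebra_simps)
  show ?thesis unfolding a_def[symmetric] L M N by (simp add: sum.distrib algebra_simps)
qed

lemma Fc_zero: "Fc q 0 t = int q ^ t - (int q - 2)^t"
proof -
  define a where "a = int q - 1"
  have "Fc q 0 t = (\<Sum>i\<le>t. of_nat (t choose i) * a^i * (1 - (-1)^(t-i)))"
    unfolding Fc_def a_def by (simp add: lessThan_Suc_atMost[symmetric])
  also have "\<dots> = (\<Sum>i\<le>t. of_nat (t choose i) * a^i * 1^(t-i)) - (\<Sum>i\<le>t. of_nat (t choose i) * a^i * (-1)^(t-i))"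
    by (simp add: sum_subtractf algebra_simps)
  also have "\<dots> = (a+1)^t - (a + (-1))^t" by (simp only: binomial_ring)
  finally show ?thesis unfolding a_def by simp
qed

lemma G0_int: "q \<ge> 2 \<Longrightarrow> int (G q 0 t) = int q ^ t - (int q - 2)^t"
proof (induction t)
  case 0 then show ?case by simp
next
  case (Suc t)
  have "int (G q 0 (Suc t)) = 2 * int q ^ t + (int q - 2) * int (G q 0 t)"
    using Suc.prems by (simp add: of_nat_diff)
  also have "\<dots> = 2 * int q ^ t + (int q - 2) * (int q ^ t - (int q - 2)^t)" using Suc by simp
  also have "\<dots> = int q ^ Suc t - (int q - 2)^Suc t" by (simp add: algebra_simps)
  finally show ?case .
qed

lemma G_Fc: assumes q2: "q \<ge> 2" shows "int (G q n t) = Fc q n t"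
proof (induction n arbitrary: t)
  case 0 then show ?case using q2 by (simp add: G0_int Fc_zero)
next
  case (Suc n)
  have IHn: "\<And>t. int (G q n t) = Fc q n t" using Suc.IH by blast
  show ?case
  proof (induction t)
    case 0 then show ?case by (simp add: Fc_def)
  next
    case (Suc t)
    have "int (G q (Suc n) (Suc t)) = int (G q n (Suc t)) + (int q - 1) * int (G q (Suc n) t)"
      using q2 by (simp only: G_rec) (simp add: of_nat_diff)
    also have "\<dots> = Fc q n (Suc t) + (int q - 1) * Fc q (Suc n) t"
      by (simp only: Suc.IH IHn)
    finally show ?case by (simp add: Fc_pascal)
  qed
qed

theorem theorem3p3:
  fixes q b n t :: nat
  assumes "n \<ge> 1" and "t \<ge> 1" and "q \<ge> 2" and "b \<ge> 1"
  shows "int (N_plus q b n t) =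
    int q ^ (t * (b - 1)) *
      (\<Sum>i = 0..t - 1. int ((n + t) choose i) * (int q - 1) ^ i * (1 - (-1) ^ (t - i)))"
proof -
  obtain m where m: "n = Suc m" using assms(1) by (cases n) auto
  let ?c = "q^(b-1)"
  let ?A = "{card (burst_ins_ball q b t x \<inter> burst_ins_ball q b t y) | x y.
      x \<in> seqs q n \<and> y \<in> seqs q n \<and> x \<noteq> y}"
  have fin: "finite ?A"
  proof (rule finite_subset)
    show "?A \<subseteq> (\<lambda>p. card (burst_ins_ball q b t (fst p) \<inter> burst_ins_ball q b t (snd p))) ` (seqs q n \<times> seqs q n)"
      by force
    show "finite ((\<lambda>p. card (burst_ins_ball q b t (fst p) \<inter> burst_ins_ball q b t (snd p))) ` (seqs q n \<times> seqs q n))"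
      using finite_seqs by simp
  qed
  have mx: "Max ?A = ?c^t * G q n t"
  proof (rule Max_eqI[OF fin])
    fix k assume "k \<in> ?A"
    then obtain x y where "k = card (burst_ins_ball q b t x \<inter> burst_ins_ball q b t y)"
      "x \<in> seqs q n" "y \<in> seqs q n" "x \<noteq> y" by blast
    then show "k \<le> ?c^t * G q n t" using upper[OF assms(4)] by (simp add: B_eq Bs_def[symmetric])
  next
    have "0 # replicate m 0 \<in> seqs q n" "1 # replicate m 0 \<in> seqs q n"
      using assms(3) m by (auto simp: seqs_def)
    moreover have "card (burst_ins_ball q b t (0 # replicate m 0) \<inter> burst_ins_ball q b t (1 # replicate m 0)) = ?c^t * G q n t"
      using lower[OF assms(4) assms(3), of t m] m by (simp add: B_eq Bs_def[symmetric])
    ultimately show "?c^t * G q n t \<in> ?A" by force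
  qed
  have N: "N_plus q b n t = ?c^t * G q n t" unfolding N_plus_def using mx .
  have S: "{0..t-1} = {..<t}" using assms(2) by auto
  have "int (N_plus q b n t) = int q ^ (t * (b - 1)) * Fc q n t"
  proof -
    have p: "int q ^ (t * (b - 1)) = (int q^(b-1))^t" by (simp add: power_mult[symmetric] mult.commute)
    show ?thesis unfolding N p using G_Fc[OF assms(3), of n t] by simp
  qed
  then show ?thesis unfolding Fc_def S .
qed

end
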